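(* Assume (A1)–(A4). Let $u,v\in C(\overline{Q_T})$ be viscosity solutions of $\partial_t^\alpha u+H(t,x,u,Du)=0$ in $Q_T$. Then $$\max_{(t,x)\in\overline{Q_T}}|u(t,x)-v(t,x)|\le\max_{x\in\mathbb{T}^d}|u(0,x)-v(0,x)|.$$ Moreover, if $u$ and $v$ are viscosity solutions of this equation with $u(0,\cdot)=v(0,\cdot)=u_0$ on $\mathbb{T}^d$, then $u\equiv v$ on $\overline{Q_T}$.
   Context: Fix $d\ge1$, $T>0$, $\alpha\in(0,1)$. $\mathbb{T}^d=\mathbb{R}^d/\mathbb{Z}^d$; functions on $[0,T]\times\mathbb{T}^d$ are identified with functions on $[0,T]\times\mathbb{R}^d$ $\mathbb{Z}^d$-periodic in $x$. $Q_T=(0,T]\times\mathbb{T}^d$, $\overline{Q_T}=[0,T]\times\mathbb{T}^d$; $D$ spatial gradient; $\partial_t^\alpha$ Caputo's derivative $(\partial_t^\alpha f)(t)=\frac{1}{\Gamma(1-\alpha)}\int_0^t f'(s)(t-s)^{-\alpha}ds$. $H:\overline{Q_T}\times\mathbb{R}\times\mathbb{R}^d\to\mathbb{R}$, $u_0:\mathbb{T}^d\to\mathbb{R}$. Assumptions: (A1) $H$ continuous. (A2) there is a modulus $\omega$ with $|H(t,x,r,p)-H(t,y,r,p)|\le\omega(|x-y|(1+|p|))$ for all $t\in[0,T]$, $x,y\in\mathbb{R}^d$, $r\in\mathbb{R}$, $p\in\mathbb{R}^d$. (A3) $r\mapsto H(t,x,r,p)$ nondecreasing. (A4) $u_0$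 continuous. $\mathcal{C}^1([a,b]\times O)=\{\phi\in C^1((a,b]\times O)\cap C([a,b]\times O):\partial_t\phi(\cdot,x)\in L^1(a,b)\ \forall x\in O\}$. For measurable $f(t,x)$, $t\in(0,T]$, $r\in[0,t]$: $J_r[f](t,x)=\frac{\alpha}{\Gamma(1-\alpha)}\int_0^r (f(t,x)-f(t-\tau,x))\tau^{-\alpha-1}d\tau$, $K_r[f](t,x)=\frac{f(t,x)-f(0,x)}{t^\alpha\Gamma(1-\alpha)}+\frac{\alpha}{\Gamma(1-\alpha)}\int_r^t (f(t,x)-f(t-\tau,x))\tau^{-\alpha-1}d\tau$ (improper at lower limit $0$). Viscosity sub/supersolution: $u\in USC(\overline{Q_T})$ (resp. $LSC$) such that for all $a<b$ in $[0,T]$, every open ball $B$, every $\phi\in\mathcal{C}^1([0,T]\times\mathbb{R}^d)$ and every $(\hat t,\hat x)\in(a,b]\times B$ where $u-\phi$ attains its maximum (resp. minimum) over $[a,b]\times\overline B$: $J_{\hat t-a}[\phi](\hat t,\hat x)+K_{\hat t-a}[u](\hat t,\hat x)+H(\hat t,\hat x,u(\hat t,\hat x),D\phi(\hat t,\hat x))\le0$ (resp. $\ge0$). Viscosity solution: $u\in C(\overline{Q_T})$ that is both. *)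

theory Defs
  imports "HOL-Analysis.Analysis"
begin

text \<open>Points of R^d are vectors of type real^'d; a function on [0,T] x T^d is
  a function real => real^'d => real which is Z^d-periodic in the space variable.\<close>

definition int_vec :: "real ^ 'd \<Rightarrow> bool" where
  "int_vec k \<longleftrightarrow> (\<forall>i. k $ i \<in> \<int>)"

definition periodic_x :: "(real \<Rightarrow> real ^ 'd \<Rightarrow> real) \<Rightarrow> bool" where
  "periodic_x f \<longleftrightarrow> (\<forall>t x k. int_vec k \<longrightarrow> f t (x + k) = f t x)"

definition periodic_sp :: "(real ^ 'd \<Rightarrow> real) \<Rightarrow> bool" where
  "periodic_sp g \<longleftrightarrow> (\<forall>x k. int_vec k \<longrightarrow> g (x + k) = g x)"

definition usc_on :: "'a::topological_space set \<Rightarrow> ('a \<Rightarrow> real) \<Rightarrow> bool" where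
  "usc_on S f \<longleftrightarrow> (\<forall>p\<in>S. \<forall>c. f p < c \<longrightarrow> (\<forall>\<^sub>F q in at p within S. f q < c))"

definition lsc_on :: "'a::topological_space set \<Rightarrow> ('a \<Rightarrow> real) \<Rightarrow> bool" where
  "lsc_on S f \<longleftrightarrow> (\<forall>p\<in>S. \<forall>c. c < f p \<longrightarrow> (\<forall>\<^sub>F q in at p within S. c < f q))"

definition modulus :: "(real \<Rightarrow> real) \<Rightarrow> bool" where
  "modulus \<omega> \<longleftrightarrow> \<omega> 0 = 0 \<and> (\<forall>s. 0 \<le> s \<longrightarrow> 0 \<le> \<omega> s) \<and> mono_on {0..} \<omega>
     \<and> (\<omega> \<longlongrightarrow> 0) (at_right 0)"

definition test_fun ::
  "real \<Rightarrow> (real \<Rightarrow> real ^ 'd \<Rightarrow> real) \<Rightarrow> (real \<Rightarrow> real ^ 'd \<Rightarrow> real)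
     \<Rightarrow> (real \<Rightarrow> real ^ 'd \<Rightarrow> real ^ 'd) \<Rightarrow> bool" where
  "test_fun T \<phi> \<phi>t D\<phi> \<longleftrightarrow>
     continuous_on ({0..T} \<times> UNIV) (\<lambda>(t,x). \<phi> t x) \<and>
     (\<forall>t x. t \<in> {0<..T} \<longrightarrow>
        ((\<lambda>(s,y). \<phi> s y) has_derivative (\<lambda>(h,k). h * \<phi>t t x + D\<phi> t x \<bullet> k))
          (at (t,x) within {0<..T} \<times> UNIV)) \<and>
     continuous_on ({0<..T} \<times> UNIV) (\<lambda>(t,x). \<phi>t t x) \<and>
     continuous_on ({0<..T} \<times> UNIV) (\<lambda>(t,x). D\<phi> t x) \<and>
     (\<forall>x. (\<lambda>t. \<phi>t t x) absolutely_integrable_on {0..T})"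

definition J_op :: "real \<Rightarrow> real \<Rightarrow> (real \<Rightarrow> real ^ 'd \<Rightarrow> real) \<Rightarrow> real \<Rightarrow> real ^ 'd \<Rightarrow> real" where
  "J_op \<alpha> r f t x = \<alpha> / Gamma (1 - \<alpha>) *
     integral {0..r} (\<lambda>\<tau>. (f t x - f (t - \<tau>) x) * \<tau> powr (- \<alpha> - 1))"

text \<open>K_r for r > 0 (the only case used in the definition of viscosity solution,
  since r = t - a > 0 there).\<close>
definition K_op :: "real \<Rightarrow> real \<Rightarrow> (real \<Rightarrow> real ^ 'd \<Rightarrow> real) \<Rightarrow> real \<Rightarrow> real ^ 'd \<Rightarrow> real" where
  "K_op \<alpha> r f t x = (f t x - f 0 x) / (t powr \<alpha> * Gamma (1 - \<alpha>)) +
     \<alpha> / Gamma (1 - \<alpha>) * integral {r..t} (\<lambda>\<tau>. (f t x - f (t - \<tau>) x) * \<tau> powr (- \<alpha> - 1))"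

definition visc_sub ::
  "real \<Rightarrow> real \<Rightarrow> (real \<Rightarrow> real ^ 'd \<Rightarrow> real \<Rightarrow> real ^ 'd \<Rightarrow> real)
     \<Rightarrow> (real \<Rightarrow> real ^ 'd \<Rightarrow> real) \<Rightarrow> bool" where
  "visc_sub \<alpha> T H u \<longleftrightarrow> usc_on ({0..T} \<times> UNIV) (\<lambda>(t,x). u t x) \<and> periodic_x u \<and>
     (\<forall>a b c \<rho> \<phi> \<phi>t D\<phi> th xh. 0 \<le> a \<and> a < b \<and> b \<le> T \<and> test_fun T \<phi> \<phi>t D\<phi> \<and>
        th \<in> {a<..b} \<and> xh \<in> ball c \<rho> \<and>
        (\<forall>s y. s \<in> {a..b} \<and> y \<in> closure (ball c \<rho>) \<longrightarrow> u s y - \<phi> s y \<le> u th xh - \<phi> th xh)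
      \<longrightarrow> J_op \<alpha> (th - a) \<phi> th xh + K_op \<alpha> (th - a) u th xh + H th xh (u th xh) (D\<phi> th xh) \<le> 0)"

definition visc_super ::
  "real \<Rightarrow> real \<Rightarrow> (real \<Rightarrow> real ^ 'd \<Rightarrow> real \<Rightarrow> real ^ 'd \<Rightarrow> real)
     \<Rightarrow> (real \<Rightarrow> real ^ 'd \<Rightarrow> real) \<Rightarrow> bool" where
  "visc_super \<alpha> T H u \<longleftrightarrow> lsc_on ({0..T} \<times> UNIV) (\<lambda>(t,x). u t x) \<and> periodic_x u \<and>
     (\<forall>a b c \<rho> \<phi> \<phi>t D\<phi> th xh. 0 \<le> a \<and> a < b \<and> b \<le> T \<and> test_fun T \<phi> \<phi>t D\<phi> \<and>
        th \<in> {a<..b} \<and> xh \<in> ball c \<rho> \<and>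
        (\<forall>s y. s \<in> {a..b} \<and> y \<in> closure (ball c \<rho>) \<longrightarrow> u th xh - \<phi> th xh \<le> u s y - \<phi> s y)
      \<longrightarrow> J_op \<alpha> (th - a) \<phi> th xh + K_op \<alpha> (th - a) u th xh + H th xh (u th xh) (D\<phi> th xh) \<ge> 0)"

definition visc_sol ::
  "real \<Rightarrow> real \<Rightarrow> (real \<Rightarrow> real ^ 'd \<Rightarrow> real \<Rightarrow> real ^ 'd \<Rightarrow> real)
     \<Rightarrow> (real \<Rightarrow> real ^ 'd \<Rightarrow> real) \<Rightarrow> bool" where
  "visc_sol \<alpha> T H u \<longleftrightarrow> continuous_on ({0..T} \<times> UNIV) (\<lambda>(t,x). u t x) \<and>
     visc_sub \<alpha> T H u \<and> visc_super \<alpha> T H u"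

end

theory Submission
  imports Defs
begin

lemma shift_cube:
  fixes x :: "real ^ 'd"
  shows "\<exists>k. int_vec k \<and> x + k \<in> cbox 0 1"
proof -
  define k :: "real ^ 'd" where "k = (\<chi> i. - of_int (floor (x $ i)))"
  have "int_vec k" unfolding int_vec_def k_def by simp
  moreover have "x + k \<in> cbox 0 1"
    unfolding mem_box_cart
  proof
    fix i
    have "(x + k) $ i = frac (x $ i)" by (simp add: k_def frac_def)
    then show "0 $ i \<le> (x + k) $ i \<and> (x + k) $ i \<le> 1 $ i"
      using frac_ge_0[of "x $ i"] frac_lt_1[of "x $ i"] by simp
  qed
  ultimately show ?thesis by blast
qed

lemma quad_test_fun:
  fixes x0 :: "real ^ 'd"
  shows "test_fun T (\<lambda>t x. C + A * (t - t0)^2 + B * ((x - x0) \<bullet> (x - x0)))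
           (\<lambda>t x. 2 * A * (t - t0)) (\<lambda>t x. (2 * B) *\<^sub>R (x - x0))"
  unfolding test_fun_def
proof (intro conjI allI impI)
  show "continuous_on ({0..T} \<times> UNIV) (\<lambda>(t, x::real^'d). C + A * (t - t0)\<^sup>2 + B * ((x - x0) \<bullet> (x - x0)))"
    unfolding case_prod_unfold by (intro continuous_intros) 
  fix t and x :: "real^'d"
  assume "t \<in> {0<..T}"
  show "((\<lambda>(s, y). C + A * (s - t0)\<^sup>2 + B * ((y - x0) \<bullet> (y - x0))) has_derivative
        (\<lambda>(h, k). h * (2 * A * (t - t0)) + (2 * B) *\<^sub>R (x - x0) \<bullet> k)) (at (t, x) within {0<..T} \<times> UNIV)"
  proof -
    have "((\<lambda>p. C + A * (fst p - t0)\<^sup>2 + B * ((snd p - x0) \<bullet> (snd p - x0))) has_derivative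
        (\<lambda>p. 0 + A * (2 * (fst (t,x) - t0) * fst p) + B * ((snd p) \<bullet> (x - x0) + (x - x0) \<bullet> snd p))) (at (t, x) within {0<..T} \<times> UNIV)"
      by (intro derivative_eq_intros) auto
    then show ?thesis unfolding case_prod_unfold
      by (rule has_derivative_eq_rhs) (auto simp: fun_eq_iff inner_commute algebra_simps)
  qed
next
  show "continuous_on ({0<..T} \<times> UNIV) (\<lambda>(t, x::real^'d). 2 * A * (t - t0))"
    unfolding case_prod_unfold by (intro continuous_intros)
  show "continuous_on ({0<..T} \<times> UNIV) (\<lambda>(t, x::real^'d). (2 * B) *\<^sub>R (x - x0))"
    unfolding case_prod_unfold by (intro continuous_intros)
  fix x :: "real^'d"
  show "(\<lambda>t. 2 * A * (t - t0)) absolutely_integrable_on {0..T}"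
    by (intro absolutely_integrable_continuous_real continuous_intros)
qed

lemma J_quad:
  fixes x0 :: "real ^ 'd"
  assumes a: "0 < \<alpha>" "\<alpha> < 1" and r: "0 \<le> r"
  shows "J_op \<alpha> r (\<lambda>t x. C + A * (t - t0)^2 + B * ((x - x0) \<bullet> (x - x0))) t x =
    \<alpha> / Gamma (1 - \<alpha>) * (2 * A * (t - t0) * integral {0..r} (\<lambda>\<tau>. \<tau> powr (- \<alpha>))
       - A * integral {0..r} (\<lambda>\<tau>. \<tau> powr (1 - \<alpha>)))"
proof -
  have eq: "(C + A * (t - t0)^2 + B * ((x - x0) \<bullet> (x - x0)) - (C + A * (t - \<tau> - t0)^2 + B * ((x - x0) \<bullet> (x - x0)))) * \<tau> powr (- \<alpha> - 1)
     = 2 * A * (t - t0) * \<tau> powr (- \<alpha>) - A * \<tau> powr (1 - \<alpha>)" if "\<tau> \<in> {0..r}" for \<tau>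
  proof (cases "\<tau> = 0")
    case True then show ?thesis by simp
  next
    case False
    with that have tp: "\<tau> > 0" by auto
    have 1: "\<tau> * \<tau> powr (- \<alpha> - 1) = \<tau> powr (- \<alpha>)"
      using powr_mult_base[of \<tau> "- \<alpha> - 1"] tp by simp
    have 2: "\<tau> * \<tau> powr (- \<alpha>) = \<tau> powr (1 - \<alpha>)"
      using powr_mult_base[of \<tau> "- \<alpha>"] tp by simp
    have "(C + A * (t - t0)^2 + B * ((x - x0) \<bullet> (x - x0)) - (C + A * (t - \<tau> - t0)^2 + B * ((x - x0) \<bullet> (x - x0)))) * \<tau> powr (- \<alpha> - 1)
        = (2 * A * (t - t0) - A * \<tau>) * (\<tau> * \<tau> powr (- \<alpha> - 1))"
      by (simp add: power2_eq_square algebra_simps)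
    also have "\<dots> = 2 * A * (t - t0) * \<tau> powr (- \<alpha>) - A * (\<tau> * \<tau> powr (- \<alpha>))"
      unfolding 1 by (simp add: algebra_simps)
    finally show ?thesis unfolding 2 .
  qed
  have i0: "(\<lambda>\<tau>. \<tau> powr (- \<alpha>)) integrable_on {0..r}"
    by (rule integrable_on_powr_from_0) (use a r in auto)
  have i1: "(\<lambda>\<tau>. \<tau> powr (1 - \<alpha>)) integrable_on {0..r}"
    by (rule integrable_on_powr_from_0) (use a r in auto)
  have "integral {0..r} (\<lambda>\<tau>. (C + A * (t - t0)^2 + B * ((x - x0) \<bullet> (x - x0)) - (C + A * (t - \<tau> - t0)^2 + B * ((x - x0) \<bullet> (x - x0)))) * \<tau> powr (- \<alpha> - 1))
     = integral {0..r} (\<lambda>\<tau>. 2 * A * (t - t0) * \<tau> powr (- \<alpha>) - A * \<tau> powr (1 - \<alpha>))"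
    by (rule integral_cong) (use eq in auto)
  also have "\<dots> = 2 * A * (t - t0) * integral {0..r} (\<lambda>\<tau>. \<tau> powr (- \<alpha>)) - A * integral {0..r} (\<lambda>\<tau>. \<tau> powr (1 - \<alpha>))"
    using integral_diff[OF integrable_on_cmult_left[OF i0, of "2*A*(t-t0)"] integrable_on_cmult_left[OF i1, of A]] by simp
  finally show ?thesis unfolding J_op_def by simp
qed

lemma bounded_per:
  fixes u :: "real \<Rightarrow> real ^ 'd \<Rightarrow> real"
  assumes c: "continuous_on ({0..T} \<times> UNIV) (\<lambda>(t,x). u t x)" and p: "periodic_x u"
  shows "\<exists>R>0. \<forall>t\<in>{0..T}. \<forall>x. \<bar>u t x\<bar> \<le> R"
proof -
  have "compact ((\<lambda>(t,x). u t x) ` ({0..T} \<times> cbox 0 1))"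
    by (rule compact_continuous_image) (auto intro: continuous_on_subset[OF c] compact_Times)
  then obtain R where R: "R > 0" "\<forall>y\<in>(\<lambda>(t,x). u t x) ` ({0..T} \<times> cbox 0 1). norm y \<le> R"
    using compact_imp_bounded bounded_pos by blast
  have "\<forall>t\<in>{0..T}. \<forall>x. \<bar>u t x\<bar> \<le> R"
  proof (intro ballI allI)
    fix t and x :: "real ^ 'd" assume t: "t \<in> {0..T}"
    obtain k where k: "int_vec k" "x + k \<in> cbox 0 1" using shift_cube by blast
    have "u t x = u t (x + k)" using p k unfolding periodic_x_def by simp
    then show "\<bar>u t x\<bar> \<le> R" using R(2) t k by force
  qed
  then show ?thesis using R(1) by blast
qed

lemma uc_obtain:
  fixes f :: "'a::metric_space \<Rightarrow> 'b::metric_space"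
  assumes "continuous_on S f" "compact S" "e > 0"
  shows "\<exists>d>0. \<forall>x\<in>S. \<forall>x'\<in>S. dist x' x < d \<longrightarrow> dist (f x') (f x) < e"
  using compact_uniformly_continuous[OF assms(1,2)] assms(3) unfolding uniformly_continuous_on_def by blast

lemma dpair1: "dist (t, x) (t, y) = dist x y"
  by (simp add: dist_Pair_Pair)

lemma dpair2: "dist (t, x) (s, x) = dist t s"
  by (simp add: dist_Pair_Pair)

lemma inner_swap: "(a - b) \<bullet> (a - b) = (b - a) \<bullet> (b - a)" for a b :: "'a::real_inner"
  by (simp add: inner_diff_left inner_diff_right inner_commute)

lemma comparison:
  fixes \<alpha> T M :: real
    and H :: "real \<Rightarrow> real ^ 'd \<Rightarrow> real \<Rightarrow> real ^ 'd \<Rightarrow> real"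
    and u v :: "real \<Rightarrow> real ^ 'd \<Rightarrow> real"
  assumes T_pos: "0 < T" and alpha: "0 < \<alpha>" "\<alpha> < 1"
    and A1: "continuous_on ({0..T} \<times> UNIV \<times> UNIV \<times> UNIV) (\<lambda>(t,x,r,p). H t x r p)"
    and A2: "\<exists>\<omega>. modulus \<omega> \<and> (\<forall>t x y r p. t \<in> {0..T} \<longrightarrow>
               \<bar>H t x r p - H t y r p\<bar> \<le> \<omega> (norm (x - y) * (1 + norm p)))"
    and A3: "\<forall>t x p r s. t \<in> {0..T} \<longrightarrow> r \<le> s \<longrightarrow> H t x r p \<le> H t x s p"
    and uc: "continuous_on ({0..T} \<times> UNIV) (\<lambda>(t,x). u t x)"
    and vc: "continuous_on ({0..T} \<times> UNIV) (\<lambda>(t,x). v t x)"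
    and usub: "visc_sub \<alpha> T H u" and vsup: "visc_super \<alpha> T H v"
    and M: "0 \<le> M" and init: "\<forall>x. u 0 x - v 0 x \<le> M"
  shows "\<forall>t\<in>{0..T}. \<forall>x. u t x - v t x \<le> M"
proof (rule ccontr)
  assume "\<not> ?thesis"
  then obtain ts xs where ts: "ts \<in> {0..T}" and W: "u ts xs - v ts xs > M" by (auto simp: not_le)
  define W where "W = u ts xs - v ts xs"
  define \<theta> where "\<theta> = W - M"
  have th: "\<theta> > 0" using W unfolding \<theta>_def W_def by simp
  have up: "periodic_x u" using usub unfolding visc_sub_def by blast
  have vp: "periodic_x v" using vsup unfolding visc_super_def by blast
  have subP: "\<forall>a b c \<rho> \<phi> \<phi>t D\<phi> th xh. 0 \<le> a \<and> a < b \<and> b \<le> T \<and> test_fun T \<phi> \<phi>t D\<phi> \<and>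
        th \<in> {a<..b} \<and> xh \<in> ball c \<rho> \<and>
        (\<forall>s y. s \<in> {a..b} \<and> y \<in> closure (ball c \<rho>) \<longrightarrow> u s y - \<phi> s y \<le> u th xh - \<phi> th xh)
      \<longrightarrow> J_op \<alpha> (th - a) \<phi> th xh + K_op \<alpha> (th - a) u th xh + H th xh (u th xh) (D\<phi> th xh) \<le> 0"
    using usub unfolding visc_sub_def by blast
  have supP: "\<forall>a b c \<rho> \<phi> \<phi>t D\<phi> th xh. 0 \<le> a \<and> a < b \<and> b \<le> T \<and> test_fun T \<phi> \<phi>t D\<phi> \<and>
        th \<in> {a<..b} \<and> xh \<in> ball c \<rho> \<and>
        (\<forall>s y. s \<in> {a..b} \<and> y \<in> closure (ball c \<rho>) \<longrightarrow> v th xh - \<phi> th xh \<le> v s y - \<phi> s y)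
      \<longrightarrow> J_op \<alpha> (th - a) \<phi> th xh + K_op \<alpha> (th - a) v th xh + H th xh (v th xh) (D\<phi> th xh) \<ge> 0"
    using vsup unfolding visc_super_def by blast
  define G where "G = Gamma (1 - \<alpha>)"
  have G: "G > 0" unfolding G_def using alpha by simp
  obtain Ru where Ru: "Ru > 0" "\<forall>t\<in>{0..T}. \<forall>x. \<bar>u t x\<bar> \<le> Ru" using bounded_per[OF uc up] by blast
  obtain Rv where Rv: "Rv > 0" "\<forall>t\<in>{0..T}. \<forall>x. \<bar>v t x\<bar> \<le> Rv" using bounded_per[OF vc vp] by blast
  define R where "R = max Ru Rv"
  have R: "R > 0" unfolding R_def using Ru by simp
  have uR: "\<And>t x. t \<in> {0..T} \<Longrightarrow> \<bar>u t x\<bar> \<le> R" using Ru unfolding R_def by (meson max.coboundedI1)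
  have vR: "\<And>t x. t \<in> {0..T} \<Longrightarrow> \<bar>v t x\<bar> \<le> R" using Rv unfolding R_def by (meson max.coboundedI2)
  define \<kappa> where "\<kappa> = \<theta> / (T powr \<alpha> * G)"
  have ka: "\<kappa> > 0" unfolding \<kappa>_def using th G T_pos by simp
  obtain \<omega> where om: "modulus \<omega>" and omH: "\<forall>t x y r p. t \<in> {0..T} \<longrightarrow>
               \<bar>H t x r p - H t y r p\<bar> \<le> \<omega> (norm (x - y) * (1 + norm p))" using A2 by blast
  obtain \<sigma> where sg: "\<sigma> > 0" and sgP: "\<And>s. 0 \<le> s \<Longrightarrow> s < \<sigma> \<Longrightarrow> \<omega> s < \<kappa> / 8"
  proof -
    have lim: "(\<omega> \<longlongrightarrow> 0) (at_right 0)" using om unfolding modulus_def by blast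
    have "eventually (\<lambda>s. \<omega> s < \<kappa> / 8) (at_right 0)"
      by (rule order_tendstoD(2)[OF lim]) (use ka in simp)
    then obtain b where b: "b > 0" "\<And>y. y > 0 \<Longrightarrow> y < b \<Longrightarrow> \<omega> y < \<kappa> / 8"
      unfolding eventually_at_right_field by auto
    show ?thesis
    proof (rule that[OF b(1)])
      fix s :: real assume "0 \<le> s" "s < b"
      then show "\<omega> s < \<kappa> / 8" using b(2)[of s] om ka unfolding modulus_def by (cases "s = 0") auto
    qed
  qed
  define Bx :: "(real ^ 'd) set" where "Bx = cbox (vec (-1)) (vec 2)"
  define C0 where "C0 = {0..T} \<times> Bx"
  have C0c: "compact C0" unfolding C0_def Bx_def by (intro compact_Times) auto
  have cube_Bx: "cbox 0 1 \<subseteq> Bx"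
  proof
    fix x :: "real ^ 'd" assume "x \<in> cbox 0 1"
    then have *: "\<forall>i. 0 \<le> x$i \<and> x$i \<le> 1" by (simp add: mem_box_cart)
    show "x \<in> Bx" unfolding Bx_def mem_box_cart
    proof
      fix i
      have "0 \<le> x$i" "x$i \<le> 1" using * by auto
      then show "vec (-1) $ i \<le> x $ i \<and> x $ i \<le> vec 2 $ i" by simp
    qed
  qed
  define uu where "uu = (\<lambda>(t::real, x::real^'d). u t x)"
  define vv where "vv = (\<lambda>(t::real, x::real^'d). v t x)"
  have uu: "uu (t, x) = u t x" and vv: "vv (t, x) = v t x" for t x unfolding uu_def vv_def by simp_all
  have C0sub: "C0 \<subseteq> {0..T} \<times> UNIV" unfolding C0_def by auto
  have exu: "\<exists>d>0. \<forall>p\<in>C0. \<forall>q\<in>C0. dist q p < d \<longrightarrow> dist (uu q) (uu p) < \<theta> / 4"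
    by (rule uc_obtain[OF continuous_on_subset[OF uc[folded uu_def] C0sub] C0c]) (use th in simp)
  then obtain \<eta>u where \<eta>u: "\<eta>u > 0" "\<forall>p\<in>C0. \<forall>q\<in>C0. dist q p < \<eta>u \<longrightarrow> dist (uu q) (uu p) < \<theta> / 4"
    by (elim exE conjE) (rule that)
  define tolv where "tolv = min (\<theta> / 8) (\<sigma> / 4)"
  have tolv: "tolv > 0" unfolding tolv_def using th sg by simp
  have exv: "\<exists>d>0. \<forall>p\<in>C0. \<forall>q\<in>C0. dist q p < d \<longrightarrow> dist (vv q) (vv p) < tolv"
    by (rule uc_obtain[OF continuous_on_subset[OF vc[folded vv_def] C0sub] C0c tolv])
  then obtain \<eta>v where \<eta>v: "\<eta>v > 0" "\<forall>p\<in>C0. \<forall>q\<in>C0. dist q p < \<eta>v \<longrightarrow> dist (vv q) (vv p) < tolv"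
    by (elim exE conjE) (rule that)
  define \<eta> where "\<eta> = min \<eta>u \<eta>v"
  have \<eta>: "\<eta> > 0" "\<eta> \<le> \<eta>u" "\<eta> \<le> \<eta>v" unfolding \<eta>_def using \<eta>u \<eta>v by auto
  have uU: "\<bar>u t x - u t' x'\<bar> < \<theta> / 4" if "t \<in> {0..T}" "t' \<in> {0..T}" "x \<in> Bx" "x' \<in> Bx"
      "dist (t, x) (t', x') < \<eta>" for t t' x x'
  proof -
    have "(t, x) \<in> C0" "(t', x') \<in> C0" using that unfolding C0_def by auto
    then have "dist (uu (t, x)) (uu (t', x')) < \<theta> / 4" using \<eta>u(2) that(5) \<eta>(2) by force
    then show ?thesis unfolding uu by (simp add: dist_real_def)
  qed
  have vU: "\<bar>v t x - v t' x'\<bar> < tolv" if "t \<in> {0..T}" "t' \<in> {0..T}" "x \<in> Bx" "x' \<in> Bx"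
      "dist (t, x) (t', x') < \<eta>" for t t' x x'
  proof -
    have "(t, x) \<in> C0" "(t', x') \<in> C0" using that unfolding C0_def by auto
    then have "dist (vv (t, x)) (vv (t', x')) < tolv" using \<eta>v(2) that(5) \<eta>(3) by force
    then show ?thesis unfolding vv by (simp add: dist_real_def)
  qed
  define \<tau>0 where "\<tau>0 = \<eta> / 2"
  have \<tau>0: "\<tau>0 > 0" unfolding \<tau>0_def using \<eta> by simp
  define e0 where "e0 = min 1 (min (\<eta>\<^sup>2) ((\<sigma>/2)\<^sup>2))"
  have e0: "e0 > 0" "e0 \<le> 1" "e0 \<le> \<eta>\<^sup>2" "e0 \<le> (\<sigma>/2)\<^sup>2" unfolding e0_def using \<eta> sg by auto
  define \<epsilon> where "\<epsilon> = e0 / (16 * R)"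
  have \<epsilon>: "\<epsilon> > 0" "8 * R * \<epsilon> < e0" unfolding \<epsilon>_def using e0 R by (auto simp: field_simps)
  define P where "P = 1 / \<epsilon>"
  define CH :: "(real \<times> (real ^ 'd) \<times> real \<times> (real ^ 'd)) set"
    where "CH = {0..T} \<times> Bx \<times> cball 0 R \<times> cball 0 P"
  have CHc: "compact CH" unfolding CH_def Bx_def by (intro compact_Times) auto
  have Hcont: "continuous_on CH (\<lambda>(t,x,r,p). H t x r p)"
    by (rule continuous_on_subset[OF A1]) (auto simp: CH_def)
  define HH where "HH = (\<lambda>(t::real,x::real^'d,r::real,p::real^'d). H t x r p)"
  have HH: "HH (t, x, r, p) = H t x r p" for t x r p unfolding HH_def by simp
  have exH: "\<exists>d>0. \<forall>p\<in>CH. \<forall>q\<in>CH. dist q p < d \<longrightarrow> dist (HH q) (HH p) < \<kappa> / 8"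
    by (rule uc_obtain[OF Hcont[folded HH_def] CHc]) (use ka in simp)
  then obtain dH where dH: "dH > 0" "\<forall>p\<in>CH. \<forall>q\<in>CH. dist q p < dH \<longrightarrow> dist (HH q) (HH p) < \<kappa> / 8"
    by (elim exE conjE) (rule that)
  define \<gamma>g where "\<gamma>g = \<kappa> * G / (16 * R)"
  have \<gamma>g: "\<gamma>g > 0" unfolding \<gamma>g_def using ka G R by simp
  have gcont: "continuous_on {\<tau>0..T} (\<lambda>t. 1 / (t powr \<alpha>))"
    using \<tau>0 by (intro continuous_intros) auto
  obtain dg where dg: "dg > 0" "\<forall>p\<in>{\<tau>0..T}. \<forall>q\<in>{\<tau>0..T}. dist q p < dg \<longrightarrow> dist (1 / (q powr \<alpha>)) (1 / (p powr \<alpha>)) < \<gamma>g"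
    using uc_obtain[OF gcont compact_Icc \<gamma>g] by (elim exE conjE) (rule that)
  define B where "B = 2 * R * \<tau>0 powr (- \<alpha> - 1)"
  have B: "B > 0" unfolding B_def using R \<tau>0 by simp
  define dB where "dB = \<kappa> * G / (8 * \<alpha> * B)"
  have dB: "dB > 0" unfolding dB_def using ka G alpha B by simp
  define \<xi> where "\<xi> = min (min (\<eta>/2) dg) (min dH dB)"
  have \<xi>: "\<xi> > 0" "\<xi> \<le> \<eta>/2" "\<xi> \<le> dg" "\<xi> \<le> dH" "\<xi> \<le> dB" unfolding \<xi>_def using \<eta> dg dH dB by auto
  define \<delta> where "\<delta> = \<xi>\<^sup>2 / (16 * R)"
  have \<delta>: "\<delta> > 0" "8 * R * \<delta> < \<xi>\<^sup>2" unfolding \<delta>_def using \<xi> R by (auto simp: field_simps)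
  define \<Phi> where "\<Phi> t s x y = u t x - v s y - ((x - y) \<bullet> (x - y)) / (2 * \<epsilon>) - (t - s)\<^sup>2 / (2 * \<delta>)"
    for t s :: real and x y :: "real ^ 'd"
  define S :: "(real \<times> real \<times> (real ^ 'd) \<times> (real ^ 'd)) set"
    where "S = {0..T} \<times> {0..T} \<times> cbox 0 1 \<times> Bx"
  have Sc: "compact S" unfolding S_def Bx_def by (intro compact_Times) auto
  have "(0, 0, 0, 0) \<in> S" unfolding S_def Bx_def using T_pos by (simp add: mem_box_cart)
  then have Sne: "S \<noteq> {}" by blast
  have Scont: "continuous_on S (\<lambda>(t,s,x,y). \<Phi> t s x y)"
  proof -
    have c1: "continuous_on S (\<lambda>z. (\<lambda>(t,x). u t x) ((\<lambda>(t,s,x,y). (t,x)) z))"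
      by (rule continuous_on_compose2[OF uc]) (auto simp: S_def case_prod_unfold intro!: continuous_intros)
    have c2: "continuous_on S (\<lambda>z. (\<lambda>(t,x). v t x) ((\<lambda>(t,s,x,y). (s,y)) z))"
      by (rule continuous_on_compose2[OF vc]) (auto simp: S_def case_prod_unfold intro!: continuous_intros)
    have "continuous_on S (\<lambda>z. (\<lambda>(t,x). u t x) ((\<lambda>(t,s,x,y). (t,x)) z) - (\<lambda>(t,x). v t x) ((\<lambda>(t,s,x,y). (s,y)) z)
       - ((snd (snd (snd z)) - fst (snd (snd z))) \<bullet> (snd (snd (snd z)) - fst (snd (snd z)))) / (2 * \<epsilon>)
       - (fst z - fst (snd z))\<^sup>2 / (2 * \<delta>))"
      by (intro continuous_intros c1 c2) (use \<epsilon> \<delta> in auto)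
    then show ?thesis
      by (rule continuous_on_eq) (auto simp: \<Phi>_def case_prod_unfold inner_commute algebra_simps)
  qed
  obtain zb where zb: "zb \<in> S" "\<forall>z\<in>S. (\<lambda>(t,s,x,y). \<Phi> t s x y) z \<le> (\<lambda>(t,s,x,y). \<Phi> t s x y) zb"
    using continuous_attains_sup[OF Sc Sne Scont] by blast
  obtain tb sb xb yb where zbe: "zb = (tb, sb, xb, yb)" by (cases zb) auto
  have tb: "tb \<in> {0..T}" and sb: "sb \<in> {0..T}" and xb: "xb \<in> cbox 0 1" and yb: "yb \<in> Bx"
    using zb(1) unfolding zbe S_def by auto
  have Smax: "\<Phi> t s x y \<le> \<Phi> tb sb xb yb" if "t \<in> {0..T}" "s \<in> {0..T}" "x \<in> cbox 0 1" "y \<in> Bx" for t s x y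
    using zb(2) that unfolding zbe S_def by force
  have shift: "\<Phi> t s (x + k) (y + k) = \<Phi> t s x y" if "int_vec k" for t s x y k
    using up vp that unfolding \<Phi>_def periodic_x_def by simp
  have Wle: "W \<le> \<Phi> tb sb xb yb"
  proof -
    obtain k where k: "int_vec k" "xs + k \<in> cbox 0 1" using shift_cube by blast
    have "W = \<Phi> ts ts xs xs" unfolding W_def \<Phi>_def by simp
    also have "\<dots> = \<Phi> ts ts (xs + k) (xs + k)" using shift[OF k(1)] by simp
    also have "\<dots> \<le> \<Phi> tb sb xb yb" using Smax ts k cube_Bx by blast
    finally show ?thesis .
  qed
  have Wge: "W \<ge> - 2 * R" using uR[OF ts, of xs] vR[OF ts, of xs] unfolding W_def by (simp add: abs_le_iff)
  have pos_x: "0 \<le> (x - y) \<bullet> (x - y) / (2 * \<epsilon>)" for x y :: "real ^ 'd" using \<epsilon> by simp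
  have pos_t: "0 \<le> (t - s)\<^sup>2 / (2 * \<delta>)" for t s :: real using \<delta> by simp
  have gm: "\<Phi> t s x y \<le> \<Phi> tb sb xb yb" if ts': "t \<in> {0..T}" "s \<in> {0..T}" for t s x y
  proof -
    obtain k where k: "int_vec k" "x + k \<in> cbox 0 1" using shift_cube by blast
    show ?thesis
    proof (cases "norm (x - y) \<le> 1")
      case True
      have "y + k \<in> Bx" unfolding Bx_def mem_box_cart
      proof
        fix i
        have "0 \<le> (x + k) $ i" "(x + k) $ i \<le> 1" using k(2) by (auto simp: mem_box_cart)
        moreover have "\<bar>(x - y) $ i\<bar> \<le> 1" using component_le_norm_cart[of "x - y" i] True by linarith
        ultimately show "vec (-1) $ i \<le> (y + k) $ i \<and> (y + k) $ i \<le> vec 2 $ i" by (simp add: abs_le_iff)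
      qed
      then have "\<Phi> t s (x + k) (y + k) \<le> \<Phi> tb sb xb yb" using Smax ts' k(2) by blast
      then show ?thesis using shift[OF k(1)] by simp
    next
      case False
      then have n1: "1 < (x - y) \<bullet> (x - y)"
        by (metis power2_norm_eq_inner not_le one_less_power zero_less_numeral)
      have "1 / (2 * \<epsilon>) > 4 * R" using \<epsilon> e0 R by (simp add: field_simps)
      moreover have "1 / (2 * \<epsilon>) \<le> (x - y) \<bullet> (x - y) / (2 * \<epsilon>)"
        using n1 \<epsilon> by (intro divide_right_mono) auto
      ultimately have "(x - y) \<bullet> (x - y) / (2 * \<epsilon>) > 4 * R" by linarith
      moreover have "u t x \<le> R" "- R \<le> v s y" using uR[OF ts'(1), of x] vR[OF ts'(2), of y] by auto
      ultimately have "\<Phi> t s x y \<le> - 2 * R" unfolding \<Phi>_def using pos_t[of t s] by linarith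
      then show ?thesis using Wge Wle by linarith
    qed
  qed
  define nx where "nx = norm (xb - yb)"
  define dt where "dt = \<bar>tb - sb\<bar>"
  have nx0: "nx \<ge> 0" unfolding nx_def by simp
  have nxi: "(xb - yb) \<bullet> (xb - yb) = nx\<^sup>2" unfolding nx_def by (simp add: power2_norm_eq_inner)
  have dti: "(tb - sb)\<^sup>2 = dt\<^sup>2" unfolding dt_def by simp
  have wbar: "u tb xb - v sb yb \<ge> W" using Wle pos_x[of xb yb] pos_t[of tb sb] unfolding \<Phi>_def by linarith
  have penb: "(xb - yb) \<bullet> (xb - yb) / (2 * \<epsilon>) + (tb - sb)\<^sup>2 / (2 * \<delta>) \<le> 4 * R"
    using Wle Wge uR[OF tb, of xb] vR[OF sb, of yb] unfolding \<Phi>_def by (simp add: abs_le_iff)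
  have "nx\<^sup>2 / (2 * \<epsilon>) \<le> 4 * R" using penb pos_t[of tb sb] unfolding nxi by linarith
  then have nx2: "nx\<^sup>2 \<le> 8 * R * \<epsilon>" using \<epsilon> by (simp add: field_simps)
  have "dt\<^sup>2 / (2 * \<delta>) \<le> 4 * R" using penb pos_x[of xb yb] unfolding dti by linarith
  then have dt2: "dt\<^sup>2 \<le> 8 * R * \<delta>" using \<delta> by (simp add: field_simps)
  have nx1: "nx < 1" using nx2 \<epsilon> e0 nx0 by (smt (verit) power_less_imp_less_base one_power2)
  have nx\<eta>: "nx < \<eta>" using nx2 \<epsilon> e0 nx0 \<eta> by (smt (verit) power_less_imp_less_base)
  have "nx\<^sup>2 < (\<sigma> / 2)\<^sup>2" using nx2 \<epsilon> e0 by linarith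
  then have nx\<sigma>: "nx < \<sigma> / 2" by (rule power_less_imp_less_base) (use sg in auto)
  have "dt\<^sup>2 < \<xi>\<^sup>2" using dt2 \<delta> by linarith
  then have dt\<xi>: "dt < \<xi>" by (rule power_less_imp_less_base) (use \<xi> in auto)
  have xbB: "xb \<in> Bx" using xb cube_Bx by blast
  have fx: "nx\<^sup>2 / (2 * \<epsilon>) \<le> v sb xb - v sb yb"
    using gm[OF tb sb, of xb xb] nxi unfolding \<Phi>_def by simp
  have "\<bar>v sb xb - v sb yb\<bar> < tolv"
    by (rule vU[OF sb sb xbB yb]) (use nx\<eta> in \<open>simp add: dpair1 nx_def dist_norm\<close>)
  moreover have "tolv \<le> \<sigma> / 4" unfolding tolv_def by simp
  ultimately have "nx\<^sup>2 / (2 * \<epsilon>) < \<sigma> / 4" using fx by linarith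
  moreover have "nx\<^sup>2 / \<epsilon> = 2 * (nx\<^sup>2 / (2 * \<epsilon>))" using \<epsilon> by simp
  ultimately have "nx\<^sup>2 / \<epsilon> < \<sigma> / 2" by linarith
  then have sarg: "nx + nx\<^sup>2 / \<epsilon> < \<sigma>" using nx\<sigma> by linarith
  have v0: "\<bar>v 0 xb - v 0 yb\<bar> < tolv"
    by (rule vU[OF _ _ xbB yb]) (use nx\<eta> T_pos in \<open>simp_all add: dpair1 nx_def dist_norm\<close>)
  have tolv8: "tolv \<le> \<theta> / 8" unfolding tolv_def by simp
  have tb0: "tb \<ge> \<tau>0"
  proof (rule ccontr)
    assume "\<not> tb \<ge> \<tau>0"
    then have tbl: "tb < \<tau>0" by simp
    have sbl: "sb < \<eta>" using tbl dt\<xi> \<xi> unfolding dt_def \<tau>0_def by linarith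
    have "\<bar>u tb xb - u 0 xb\<bar> < \<theta> / 4"
      by (rule uU[OF tb _ xbB xbB]) (use tbl tb T_pos \<tau>0_def \<eta> in \<open>auto simp: dpair2 dist_real_def\<close>)
    moreover have "\<bar>v sb yb - v 0 yb\<bar> < tolv"
      by (rule vU[OF sb _ yb yb]) (use sbl sb T_pos in \<open>auto simp: dpair2 dist_real_def\<close>)
    moreover have "u 0 xb - v 0 xb \<le> M" using init by blast
    ultimately show False using v0 wbar tolv8 unfolding \<theta>_def by (simp add: abs_less_iff)
  qed
  have sb0: "sb \<ge> \<tau>0"
  proof (rule ccontr)
    assume "\<not> sb \<ge> \<tau>0"
    then have sbl: "sb < \<tau>0" by simp
    have tbl: "tb < \<eta>" using sbl dt\<xi> \<xi> unfolding dt_def \<tau>0_def by linarith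
    have "\<bar>u tb xb - u 0 xb\<bar> < \<theta> / 4"
      by (rule uU[OF tb _ xbB xbB]) (use tbl tb T_pos in \<open>auto simp: dpair2 dist_real_def\<close>)
    moreover have "\<bar>v sb yb - v 0 yb\<bar> < tolv"
      by (rule vU[OF sb _ yb yb]) (use sbl sb T_pos \<tau>0_def \<eta> in \<open>auto simp: dpair2 dist_real_def\<close>)
    moreover have "u 0 xb - v 0 xb \<le> M" using init by blast
    ultimately show False using v0 wbar tolv8 unfolding \<theta>_def by (simp add: abs_less_iff)
  qed
  define m where "m = min tb sb"
  have m: "\<tau>0 \<le> m" "m \<le> tb" "m \<le> sb" using tb0 sb0 unfolding m_def by auto
  have mdt: "(tb - m) + (sb - m) = dt" unfolding m_def dt_def by auto
  define r where "r = min \<tau>0 (min 1 (\<kappa> * G * \<delta> / (8 * \<alpha>)))"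
  have r: "r > 0" "r \<le> \<tau>0" "r \<le> 1" "r \<le> \<kappa> * G * \<delta> / (8 * \<alpha>)"
    unfolding r_def using \<tau>0 ka G \<delta> alpha by auto
  have tbT: "tb \<le> T" and sbT: "sb \<le> T" using tb sb by auto
  have tbp: "tb > 0" and sbp: "sb > 0" using tb0 sb0 \<tau>0 by auto
  define p where "p = (1 / \<epsilon>) *\<^sub>R (xb - yb)"
  have np: "norm p = nx / \<epsilon>" unfolding p_def nx_def using \<epsilon> by simp
  define phi where "phi = (\<lambda>t x. v sb yb + (1 / (2 * \<delta>)) * (t - sb)^2 + (1 / (2 * \<epsilon>)) * ((x - yb) \<bullet> (x - yb)))"
  define phit where "phit = (\<lambda>t (x::real^'d). 2 * (1 / (2 * \<delta>)) * (t - sb))"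
  define Dphi where "Dphi = (\<lambda>(t::real) x. (2 * (1 / (2 * \<epsilon>))) *\<^sub>R (x - yb))"
  have tf1: "test_fun T phi phit Dphi"
    unfolding phi_def phit_def Dphi_def by (rule quad_test_fun)
  have Dphi: "Dphi tb xb = p" unfolding p_def Dphi_def by simp
  have phiPhi: "u s y - phi s y = \<Phi> s sb y yb" for s y
    unfolding phi_def \<Phi>_def by simp
  have subI: "J_op \<alpha> (tb - (tb - r)) phi tb xb + K_op \<alpha> (tb - (tb - r)) u tb xb + H tb xb (u tb xb) (Dphi tb xb) \<le> 0"
  proof (rule subP[rule_format, where a="tb - r" and b=tb and c=xb and \<rho>=1 and \<phi>=phi and \<phi>t=phit and D\<phi>=Dphi and th=tb and xh=xb])
    show "0 \<le> tb - r \<and> tb - r < tb \<and> tb \<le> T \<and> test_fun T phi phit Dphi \<and>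
        tb \<in> {tb - r<..tb} \<and> xb \<in> ball xb 1 \<and>
        (\<forall>s y. s \<in> {tb - r..tb} \<and> y \<in> closure (ball xb 1) \<longrightarrow> u s y - phi s y \<le> u tb xb - phi tb xb)"
    proof (intro conjI allI impI)
      fix s y assume "s \<in> {tb - r..tb} \<and> y \<in> closure (ball xb (1::real))"
      then have "s \<in> {0..T}" using r tb0 tbT by auto
      then show "u s y - phi s y \<le> u tb xb - phi tb xb" unfolding phiPhi using gm[OF _ sb] by blast
    qed (use r tb0 tbT tf1 in auto)
  qed
  define psi where "psi = (\<lambda>s y. u tb xb + (-1 / (2 * \<delta>)) * (s - tb)^2 + (-1 / (2 * \<epsilon>)) * ((y - xb) \<bullet> (y - xb)))"
  define psit where "psit = (\<lambda>s (y::real^'d). 2 * (-1 / (2 * \<delta>)) * (s - tb))"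
  define Dpsi where "Dpsi = (\<lambda>(s::real) y. (2 * (-1 / (2 * \<epsilon>))) *\<^sub>R (y - xb))"
  have tf2: "test_fun T psi psit Dpsi"
    unfolding psi_def psit_def Dpsi_def by (rule quad_test_fun)
  have Dpsi: "Dpsi sb yb = p"
  proof -
    have "Dpsi sb yb = (- (1 / \<epsilon>)) *\<^sub>R (yb - xb)" unfolding Dpsi_def using \<epsilon> by simp
    also have "\<dots> = p" unfolding p_def by (simp add: scaleR_diff_right)
    finally show ?thesis .
  qed
  have psiPhi: "v s y - psi s y = - \<Phi> tb s xb y" for s y
  proof -
    have "(s - tb)\<^sup>2 = (tb - s)\<^sup>2" by (simp add: power2_commute)
    moreover have "(y - xb) \<bullet> (y - xb) = (xb - y) \<bullet> (xb - y)" by (rule inner_swap)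
    ultimately show ?thesis unfolding psi_def \<Phi>_def by simp
  qed
  have supI: "J_op \<alpha> (sb - (sb - r)) psi sb yb + K_op \<alpha> (sb - (sb - r)) v sb yb + H sb yb (v sb yb) (Dpsi sb yb) \<ge> 0"
  proof (rule supP[rule_format, where a="sb - r" and b=sb and c=yb and \<rho>=1 and \<phi>=psi and \<phi>t=psit and D\<phi>=Dpsi and th=sb and xh=yb])
    show "0 \<le> sb - r \<and> sb - r < sb \<and> sb \<le> T \<and> test_fun T psi psit Dpsi \<and>
        sb \<in> {sb - r<..sb} \<and> yb \<in> ball yb 1 \<and>
        (\<forall>s y. s \<in> {sb - r..sb} \<and> y \<in> closure (ball yb 1) \<longrightarrow> v sb yb - psi sb yb \<le> v s y - psi s y)"
    proof (intro conjI allI impI)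
      fix s y assume "s \<in> {sb - r..sb} \<and> y \<in> closure (ball yb (1::real))"
      then have "s \<in> {0..T}" using r sb0 sbT by auto
      then show "v sb yb - psi sb yb \<le> v s y - psi s y" unfolding psiPhi using gm[OF tb] by force
    qed (use r sb0 sbT tf2 in auto)
  qed
  define I0 where "I0 = integral {0..r} (\<lambda>\<tau>. \<tau> powr (- \<alpha>))"
  define I1 where "I1 = integral {0..r} (\<lambda>\<tau>. \<tau> powr (1 - \<alpha>))"
  have Jphi: "J_op \<alpha> r phi tb xb = \<alpha> / G * (2 * (1 / (2 * \<delta>)) * (tb - sb) * I0 - (1 / (2 * \<delta>)) * I1)"
    unfolding phi_def I0_def I1_def G_def by (rule J_quad) (use alpha r in auto)
  have Jpsi: "J_op \<alpha> r psi sb yb = \<alpha> / G * (2 * (-1 / (2 * \<delta>)) * (sb - tb) * I0 - (-1 / (2 * \<delta>)) * I1)"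
    unfolding psi_def I0_def I1_def G_def by (rule J_quad) (use alpha r in auto)
  have I1r: "I1 \<le> r"
  proof -
    have "I1 \<le> integral {0..r} (\<lambda>\<tau>. 1::real)" unfolding I1_def
    proof (rule integral_le)
      show "(\<lambda>\<tau>. \<tau> powr (1 - \<alpha>)) integrable_on {0..r}"
        by (rule integrable_on_powr_from_0) (use alpha r in auto)
      show "(\<lambda>\<tau>. 1::real) integrable_on {0..r}" by (rule integrable_continuous_interval) (rule continuous_on_const)
      fix \<tau> assume "\<tau> \<in> {0..r}"
      then show "\<tau> powr (1 - \<alpha>) \<le> 1" using r alpha by (intro powr_le1) auto
    qed
    also have "\<dots> = r" using r by simp
    finally show ?thesis .
  qed
  have Jdiff: "J_op \<alpha> r phi tb xb - J_op \<alpha> r psi sb yb = - (\<alpha> / G * (I1 / \<delta>))"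
    unfolding Jphi Jpsi using \<delta> G by (simp add: field_simps)
  have "\<alpha> / G * (I1 / \<delta>) \<le> \<alpha> / G * (r / \<delta>)"
    using I1r alpha G \<delta> by (intro mult_left_mono divide_right_mono) auto
  also have "\<alpha> / G * (r / \<delta>) \<le> \<kappa> / 8"
  proof -
    have "\<alpha> * r \<le> \<alpha> * (\<kappa> * G * \<delta> / (8 * \<alpha>))" using r(4) alpha by (intro mult_left_mono) auto
    also have "\<dots> = \<kappa> * G * \<delta> / 8" using alpha by simp
    finally have "\<alpha> * r \<le> \<kappa> * G * \<delta> / 8" .
    then show ?thesis using G \<delta> by (simp add: field_simps)
  qed
  finally have Jb: "J_op \<alpha> r phi tb xb - J_op \<alpha> r psi sb yb \<ge> - (\<kappa> / 8)" unfolding Jdiff by linarith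
  define U where "U = (\<lambda>\<tau>. (u tb xb - u (tb - \<tau>) xb) * \<tau> powr (- \<alpha> - 1))"
  define V where "V = (\<lambda>\<tau>. (v sb yb - v (sb - \<tau>) yb) * \<tau> powr (- \<alpha> - 1))"
  have Ku: "K_op \<alpha> r u tb xb = (u tb xb - u 0 xb) / (tb powr \<alpha> * G) + \<alpha> / G * integral {r..tb} U"
    unfolding K_op_def U_def G_def by simp
  have Kv: "K_op \<alpha> r v sb yb = (v sb yb - v 0 yb) / (sb powr \<alpha> * G) + \<alpha> / G * integral {r..sb} V"
    unfolding K_op_def V_def G_def by simp
  have cU: "continuous_on {r..tb} U"
  proof -
    have "continuous_on {r..tb} (\<lambda>\<tau>. uu (tb - \<tau>, xb))"
      by (rule continuous_on_compose2[OF uc[folded uu_def]]) (use tbT r in \<open>auto intro!: continuous_intros\<close>)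
    then have c: "continuous_on {r..tb} (\<lambda>\<tau>. u (tb - \<tau>) xb)" unfolding uu .
    show ?thesis unfolding U_def by (intro continuous_intros c) (use r in auto)
  qed
  have cV: "continuous_on {r..sb} V"
  proof -
    have "continuous_on {r..sb} (\<lambda>\<tau>. vv (sb - \<tau>, yb))"
      by (rule continuous_on_compose2[OF vc[folded vv_def]]) (use sbT r in \<open>auto intro!: continuous_intros\<close>)
    then have c: "continuous_on {r..sb} (\<lambda>\<tau>. v (sb - \<tau>) yb)" unfolding vv .
    show ?thesis unfolding V_def by (intro continuous_intros c) (use r in auto)
  qed
  have iU: "U integrable_on {r..tb}" by (rule integrable_continuous_interval[OF cU])
  have iV: "V integrable_on {r..sb}" by (rule integrable_continuous_interval[OF cV])
  have rm: "r \<le> m" using r m by linarith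
  have splU: "integral {r..tb} U = integral {r..m} U + integral {m..tb} U"
    using Henstock_Kurzweil_Integration.integral_combine[OF rm m(2) iU] by simp
  have splV: "integral {r..sb} V = integral {r..m} V + integral {m..sb} V"
    using Henstock_Kurzweil_Integration.integral_combine[OF rm m(3) iV] by simp
  have iUa: "U integrable_on {r..m}" by (rule integrable_subinterval_real[OF iU]) (use m in auto)
  have iVa: "V integrable_on {r..m}" by (rule integrable_subinterval_real[OF iV]) (use m in auto)
  have iUb: "U integrable_on {m..tb}" by (rule integrable_subinterval_real[OF iU]) (use rm in auto)
  have iVb: "V integrable_on {m..sb}" by (rule integrable_subinterval_real[OF iV]) (use rm in auto)
  have UV: "integral {r..m} V \<le> integral {r..m} U"
  proof (rule integral_le[OF iVa iUa])
    fix \<tau> assume t: "\<tau> \<in> {r..m}"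
    then have "tb - \<tau> \<in> {0..T}" "sb - \<tau> \<in> {0..T}" using m tbT sbT r by auto
    from gm[OF this] have "\<Phi> (tb - \<tau>) (sb - \<tau>) xb yb \<le> \<Phi> tb sb xb yb" .
    then have "v sb yb - v (sb - \<tau>) yb \<le> u tb xb - u (tb - \<tau>) xb"
      unfolding \<Phi>_def by (simp add: algebra_simps)
    then show "V \<tau> \<le> U \<tau>" unfolding U_def V_def by (intro mult_right_mono) auto
  qed
  have powB: "\<tau> powr (- \<alpha> - 1) \<le> \<tau>0 powr (- \<alpha> - 1)" if "\<tau> \<ge> \<tau>0" for \<tau>
    by (rule powr_mono2') (use alpha \<tau>0 that in auto)
  have remU: "\<bar>integral {m..tb} U\<bar> \<le> B * (tb - m)"
  proof -
    have "norm (integral {m..tb} U) \<le> B * Henstock_Kurzweil_Integration.content {m..tb}"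
    proof (rule has_integral_bound_real[OF _ finite.emptyI integrable_integral[OF iUb]])
      show "0 \<le> B" using B by simp
      fix \<tau> assume "\<tau> \<in> {m..tb} - {}"
      then have t: "\<tau> \<ge> \<tau>0" "tb - \<tau> \<in> {0..T}" using m tbT \<tau>0 by auto
      have "\<bar>u tb xb - u (tb - \<tau>) xb\<bar> \<le> 2 * R" using uR[OF tb, of xb] uR[OF t(2), of xb] by linarith
      moreover have "0 \<le> \<tau> powr (- \<alpha> - 1)" by simp
      ultimately have "\<bar>u tb xb - u (tb - \<tau>) xb\<bar> * \<tau> powr (- \<alpha> - 1) \<le> 2 * R * \<tau>0 powr (- \<alpha> - 1)"
        using powB[OF t(1)] R by (intro mult_mono) auto
      then show "norm (U \<tau>) \<le> B" unfolding U_def B_def by (simp add: abs_mult)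
    qed
    then show ?thesis using m by simp
  qed
  have remV: "\<bar>integral {m..sb} V\<bar> \<le> B * (sb - m)"
  proof -
    have "norm (integral {m..sb} V) \<le> B * Henstock_Kurzweil_Integration.content {m..sb}"
    proof (rule has_integral_bound_real[OF _ finite.emptyI integrable_integral[OF iVb]])
      show "0 \<le> B" using B by simp
      fix \<tau> assume "\<tau> \<in> {m..sb} - {}"
      then have t: "\<tau> \<ge> \<tau>0" "sb - \<tau> \<in> {0..T}" using m sbT \<tau>0 by auto
      have "\<bar>v sb yb - v (sb - \<tau>) yb\<bar> \<le> 2 * R" using vR[OF sb, of yb] vR[OF t(2), of yb] by linarith
      moreover have "0 \<le> \<tau> powr (- \<alpha> - 1)" by simp
      ultimately have "\<bar>v sb yb - v (sb - \<tau>) yb\<bar> * \<tau> powr (- \<alpha> - 1) \<le> 2 * R * \<tau>0 powr (- \<alpha> - 1)"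
        using powB[OF t(1)] R by (intro mult_mono) auto
      then show "norm (V \<tau>) \<le> B" unfolding V_def B_def by (simp add: abs_mult)
    qed
    then show ?thesis using m by simp
  qed
  have intdiff: "\<alpha> * (integral {r..tb} U - integral {r..sb} V) \<ge> - (\<alpha> * B * dt)"
  proof -
    have Bdt: "B * dt = B * (tb - m) + B * (sb - m)" unfolding mdt[symmetric] by (simp add: algebra_simps)
    have "integral {r..tb} U - integral {r..sb} V \<ge> - (B * dt)"
      using UV remU remV unfolding splU splV Bdt abs_le_iff by linarith
    then have "\<alpha> * (- (B * dt)) \<le> \<alpha> * (integral {r..tb} U - integral {r..sb} V)"
      using alpha by (intro mult_left_mono) auto
    then show ?thesis by (simp add: algebra_simps)
  qed
  have aBdt: "\<alpha> * B * dt \<le> \<kappa> * G / 8"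
  proof -
    have "dt \<le> \<kappa> * G / (8 * \<alpha> * B)" using dt\<xi> \<xi>(5) unfolding dB_def by linarith
    then have "\<alpha> * B * dt \<le> \<alpha> * B * (\<kappa> * G / (8 * \<alpha> * B))" using alpha B by (intro mult_left_mono) auto
    also have "\<dots> = \<kappa> * G / 8" using alpha B by simp
    finally show ?thesis .
  qed
  define a1 where "a1 = u tb xb - u 0 xb"
  define a2 where "a2 = v sb yb - v 0 yb"
  have a12: "a1 - a2 \<ge> 7 * \<theta> / 8"
  proof -
    have "u 0 xb - v 0 xb \<le> M" using init by blast
    moreover have "W = M + \<theta>" unfolding \<theta>_def by simp
    ultimately show ?thesis using wbar v0 tolv8 unfolding a1_def a2_def abs_less_iff by linarith
  qed
  have tpa: "tb powr \<alpha> > 0" "sb powr \<alpha> > 0" using tbp sbp by auto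
  have tTa: "tb powr \<alpha> \<le> T powr \<alpha>" using tbp tbT alpha by (intro powr_mono2) auto
  have Tpa: "T powr \<alpha> > 0" using T_pos by simp
  have k3: "(a1 - a2) / tb powr \<alpha> \<ge> (7 * \<theta> / 8) / T powr \<alpha>"
  proof -
    have "(7 * \<theta> / 8) / T powr \<alpha> \<le> (7 * \<theta> / 8) / tb powr \<alpha>"
      using th tTa tpa Tpa by (intro divide_left_mono) auto
    also have "\<dots> \<le> (a1 - a2) / tb powr \<alpha>" using a12 tpa by (intro divide_right_mono) auto
    finally show ?thesis .
  qed
  have k4: "\<bar>1 / tb powr \<alpha> - 1 / sb powr \<alpha>\<bar> < \<gamma>g"
  proof -
    have "tb \<in> {\<tau>0..T}" "sb \<in> {\<tau>0..T}" using tb0 sb0 tbT sbT by auto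
    moreover have "dist tb sb < dg" using dt\<xi> \<xi>(3) unfolding dt_def dist_real_def by linarith
    ultimately have "dist (1 / (tb powr \<alpha>)) (1 / (sb powr \<alpha>)) < \<gamma>g" using dg(2) by blast
    then show ?thesis by (simp add: dist_real_def)
  qed
  have k5: "\<bar>a2\<bar> \<le> 2 * R" using vR[OF sb, of yb] vR[of 0 yb] T_pos unfolding a2_def by force
  have k6: "a2 * (1 / tb powr \<alpha> - 1 / sb powr \<alpha>) \<ge> - (2 * R * \<gamma>g)"
  proof -
    have "\<bar>a2 * (1 / tb powr \<alpha> - 1 / sb powr \<alpha>)\<bar> \<le> 2 * R * \<gamma>g"
      unfolding abs_mult using k4 k5 by (intro mult_mono) auto
    then show ?thesis by linarith
  qed
  have k7: "a1 / tb powr \<alpha> - a2 / sb powr \<alpha> = (a1 - a2) / tb powr \<alpha> + a2 * (1 / tb powr \<alpha> - 1 / sb powr \<alpha>)"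
    using tpa by (simp add: field_simps)
  have k10: "(7 * \<theta> / 8) / T powr \<alpha> = 7 * (\<kappa> * G) / 8" unfolding \<kappa>_def using G Tpa by (simp add: field_simps)
  have k11: "2 * R * \<gamma>g = \<kappa> * G / 8" unfolding \<gamma>g_def using R by (simp add: field_simps)
  have GK: "G * (K_op \<alpha> r u tb xb - K_op \<alpha> r v sb yb) = a1 / tb powr \<alpha> - a2 / sb powr \<alpha> + \<alpha> * (integral {r..tb} U - integral {r..sb} V)"
    unfolding Ku Kv a1_def a2_def using G tpa by (simp add: field_simps)
  have "G * (K_op \<alpha> r u tb xb - K_op \<alpha> r v sb yb) \<ge> G * (5 * \<kappa> / 8)"
  proof -
    have e: "G * (5 * \<kappa> / 8) = 5 * (\<kappa> * G) / 8" by (simp add: algebra_simps)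
    show ?thesis unfolding GK k7 e using k3 k6 intdiff aBdt k10 k11 by linarith
  qed
  then have Kb: "K_op \<alpha> r u tb xb - K_op \<alpha> r v sb yb \<ge> 5 * \<kappa> / 8" using G by simp
  have vu: "v sb yb \<le> u tb xb" using wbar th M unfolding \<theta>_def by linarith
  have H1: "H tb xb (v sb yb) p \<le> H tb xb (u tb xb) p" using A3 tb vu by blast
  have "\<bar>H tb xb (v sb yb) p - H tb yb (v sb yb) p\<bar> \<le> \<omega> (norm (xb - yb) * (1 + norm p))" using omH tb by blast
  moreover have "\<omega> (norm (xb - yb) * (1 + norm p)) < \<kappa> / 8"
  proof (rule sgP)
    show "0 \<le> norm (xb - yb) * (1 + norm p)" by simp
    have "norm (xb - yb) * (1 + norm p) = nx + nx\<^sup>2 / \<epsilon>" unfolding np nx_def[symmetric]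
      using \<epsilon> by (simp add: field_simps power2_eq_square)
    then show "norm (xb - yb) * (1 + norm p) < \<sigma>" using sarg by simp
  qed
  ultimately have H2: "H tb xb (v sb yb) p - H tb yb (v sb yb) p > - (\<kappa> / 8)" by linarith
  have H3: "\<bar>H tb yb (v sb yb) p - H sb yb (v sb yb) p\<bar> < \<kappa> / 8"
  proof -
    have pP: "norm p \<le> P" unfolding np P_def using nx1 \<epsilon> by (simp add: divide_right_mono)
    have "(tb, yb, v sb yb, p) \<in> CH" "(sb, yb, v sb yb, p) \<in> CH"
      unfolding CH_def using tb sb yb vR[OF sb, of yb] pP by (auto simp: dist_real_def)
    moreover have "dist (tb, yb, v sb yb, p) (sb, yb, v sb yb, p) < dH"
      unfolding dpair2 using dt\<xi> \<xi>(4) unfolding dt_def dist_real_def by linarith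
    ultimately have "dist (HH (tb, yb, v sb yb, p)) (HH (sb, yb, v sb yb, p)) < \<kappa> / 8" using dH(2) by blast
    then show ?thesis unfolding HH by (simp add: dist_real_def)
  qed
  have Hb: "H tb xb (u tb xb) p - H sb yb (v sb yb) p > - (\<kappa> / 4)" using H1 H2 H3 by linarith
  have rr1: "tb - (tb - r) = r" and rr2: "sb - (sb - r) = r" by simp_all
  show False using subI supI Jb Kb Hb ka unfolding rr1 rr2 Dphi Dpsi by linarith
qed


theorem corollary3p4:
  fixes \<alpha> T :: real
    and H :: "real \<Rightarrow> real ^ 'd \<Rightarrow> real \<Rightarrow> real ^ 'd \<Rightarrow> real"
    and u0 :: "real ^ 'd \<Rightarrow> real"
    and u v :: "real \<Rightarrow> real ^ 'd \<Rightarrow> real"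
  assumes T_pos: "0 < T" and alpha: "0 < \<alpha>" "\<alpha> < 1"
    and H_per: "\<forall>t x r p k. int_vec k \<longrightarrow> H t (x + k) r p = H t x r p"
    and A1: "continuous_on ({0..T} \<times> UNIV \<times> UNIV \<times> UNIV) (\<lambda>(t,x,r,p). H t x r p)"
    and A2: "\<exists>\<omega>. modulus \<omega> \<and> (\<forall>t x y r p. t \<in> {0..T} \<longrightarrow>
               \<bar>H t x r p - H t y r p\<bar> \<le> \<omega> (norm (x - y) * (1 + norm p)))"
    and A3: "\<forall>t x p r s. t \<in> {0..T} \<longrightarrow> r \<le> s \<longrightarrow> H t x r p \<le> H t x s p"
    and A4: "continuous_on UNIV u0" "periodic_sp u0"
    and u_sol: "visc_sol \<alpha> T H u" and v_sol: "visc_sol \<alpha> T H v"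
  shows "(\<forall>t \<in> {0..T}. \<forall>x. \<bar>u t x - v t x\<bar> \<le> (SUP y. \<bar>u 0 y - v 0 y\<bar>)) \<and>
         ((\<forall>x. u 0 x = u0 x) \<and> (\<forall>x. v 0 x = u0 x) \<longrightarrow> (\<forall>t \<in> {0..T}. \<forall>x. u t x = v t x))"
proof -
  have uc: "continuous_on ({0..T} \<times> UNIV) (\<lambda>(t,x). u t x)" and usub: "visc_sub \<alpha> T H u"
    and usup: "visc_super \<alpha> T H u" using u_sol unfolding visc_sol_def by auto
  have vc: "continuous_on ({0..T} \<times> UNIV) (\<lambda>(t,x). v t x)" and vsub: "visc_sub \<alpha> T H v"
    and vsup: "visc_super \<alpha> T H v" using v_sol unfolding visc_sol_def by auto
  have up: "periodic_x u" using usub unfolding visc_sub_def by blast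
  have vp: "periodic_x v" using vsub unfolding visc_sub_def by blast
  obtain Ru where Ru: "Ru > 0" "\<forall>t\<in>{0..T}. \<forall>x. \<bar>u t x\<bar> \<le> Ru" using bounded_per[OF uc up] by blast
  obtain Rv where Rv: "Rv > 0" "\<forall>t\<in>{0..T}. \<forall>x. \<bar>v t x\<bar> \<le> Rv" using bounded_per[OF vc vp] by blast
  have z: "(0::real) \<in> {0..T}" using T_pos by simp
  define M where "M = (SUP y. \<bar>u 0 y - v 0 y\<bar>)"
  have bdd: "bdd_above (range (\<lambda>y. \<bar>u 0 y - v 0 y\<bar>))"
  proof (rule bdd_aboveI2)
    fix y
    have "\<bar>u 0 y\<bar> \<le> Ru" "\<bar>v 0 y\<bar> \<le> Rv" using Ru(2) Rv(2) z by blast+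
    then show "\<bar>u 0 y - v 0 y\<bar> \<le> Ru + Rv" by linarith
  qed
  have le: "\<bar>u 0 y - v 0 y\<bar> \<le> M" for y unfolding M_def by (rule cSUP_upper[OF UNIV_I bdd])
  have M0: "0 \<le> M" using le[of undefined] by linarith
  have c1: "\<forall>t\<in>{0..T}. \<forall>x. u t x - v t x \<le> M"
    by (rule comparison[OF T_pos alpha A1 A2 A3 uc vc usub vsup M0]) (use le in \<open>auto simp: abs_le_iff\<close>)
  have c2: "\<forall>t\<in>{0..T}. \<forall>x. v t x - u t x \<le> M"
    by (rule comparison[OF T_pos alpha A1 A2 A3 vc uc vsub usup M0]) (use le in \<open>auto simp: abs_le_iff\<close>)
  have part1: "\<forall>t \<in> {0..T}. \<forall>x. \<bar>u t x - v t x\<bar> \<le> M" using c1 c2 by (auto simp: abs_le_iff)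
  show ?thesis
  proof (intro conjI impI)
    show "\<forall>t \<in> {0..T}. \<forall>x. \<bar>u t x - v t x\<bar> \<le> (SUP y. \<bar>u 0 y - v 0 y\<bar>)" using part1 unfolding M_def .
    assume "(\<forall>x. u 0 x = u0 x) \<and> (\<forall>x. v 0 x = u0 x)"
    then have "M = 0" unfolding M_def by simp
    then show "\<forall>t \<in> {0..T}. \<forall>x. u t x = v t x" using part1 by fastforce
  qed
qed

end
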